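(* Let $(\psi_1;\phi_1,\phi_2)\in\mathbb{R}^3$ be coordinates on the coroot space of the semisimple Lie algebra $\mathrm{A}_1\oplus\mathrm{A}_2$ (basis of fundamental coroots), and consider the open dual fundamental Weyl chamber $$W=\{\psi_1>0,\ 2\phi_1-\phi_2>0,\ -\phi_1+2\phi_2>0\}.$$ Consider the hyperplane arrangement $\mathrm{I}(\mathrm{A}_1\oplus\mathrm{A}_2,(\mathbf{1},\mathbf{3})\oplus(\mathbf{2},\mathbf{3}))$ inside $W$, i.e. the arrangement of the hyperplanes $\{\phi:\ \varpi\cdot\phi=0\}$ for $\varpi$ ranging over the weights of $(\mathbf{1},\mathbf{3})\oplus(\mathbf{2},\mathbf{3})$. Then this arrangement has exactly eight chambers (connected components of the complement of the hyperplanes in $W$). With respect to the ordered list of linear forms $$\big(-\phi_1+\phi_2,\ -\psi_1-\phi_1+\phi_2,\ -\psi_1+\phi_1,\ \psi_1-\phi_2,\ \psi_1-\phi_1+\phi_2\big)$$ (these are the forms $\varpi\cdot\phi$ for the weights $(0;-1,1)$, $(-1;-1,1)$, $(-1;1,0)$, $(1;0,-1)$, $(1;-1,1)$), the eight chambers have the following sign vectors and explicit descriptions: - $1$: $(+,-,-,+,+)$, $0<\phi_2-\phi_1<\phi_1<\phi_2<\psi_1$; - $2$: $(+,-,-,-,+)$, $0<\phi_2-\phi_1<\phi_1<\psi_1<\phi_2$; - $3$: $(+,-,+,-,+)$, $0<\phi_2-\phi_1<\psi_1<\phi_1<\phi_2$; - $4$: $(+,+,+,-,+)$, $0<\psi_1<\phi_2-\phi_1<\phi_1<\phi_2$;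 - $1'$: $(-,-,-,+,+)$, $0<\phi_1-\phi_2<\phi_2<\phi_1<\psi_1$; - $2'$: $(-,-,+,+,+)$, $0<\phi_1-\phi_2<\phi_2<\psi_1<\phi_1$; - $3'$: $(-,-,+,-,+)$, $0<\phi_1-\phi_2<\psi_1<\phi_2<\phi_1$; - $4'$: $(-,-,+,-,-)$, $0<\psi_1<\phi_1-\phi_2<\phi_2<\phi_1$. The adjacency graph of the chambers (two chambers adjacent when they share a codimension-one wall) is the hexagon $1-2-3-3'-2'-1'-1$ together with the two extra edges $3-4$ and $3'-4'$.
   Context: Weights are written $(a;b,c)$ where $(a)$ is a weight of $\mathrm{A}_1$ and $(b,c)$ a weight of $\mathrm{A}_2$, both in the basis of fundamental weights; the pairing of a weight $\varpi=(a;b,c)$ with $\phi=(\psi_1;\phi_1,\phi_2)$ is $\varpi\cdot\phi=a\psi_1+b\phi_1+c\phi_2$. The weights of the fundamental $\mathbf{2}$ of $\mathrm{A}_1$ are $1,-1$; those of the fundamental $\mathbf{3}$ of $\mathrm{A}_2$ are $(1,0),(-1,1),(0,-1)$. Hence the weights of $(\mathbf{1},\mathbf{3})$ are $(0;1,0),(0;-1,1),(0;0,-1)$ and those of the bifundamental $(\mathbf{2},\mathbf{3})$ are $(\pm1;1,0),(\pm1;-1,1),(\pm1;0,-1)$. *)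

theory Defs
  imports "HOL-Analysis.Analysis"
begin

text \<open>Points of the coroot space are triples (psi1, phi1, phi2); weights are triples (a, b, c).\<close>

definition wpair :: "real \<times> real \<times> real \<Rightarrow> real \<times> real \<times> real \<Rightarrow> real" where
  "wpair w p = (case w of (a, b, c) \<Rightarrow> case p of (x, y, z) \<Rightarrow> a * x + b * y + c * z)"

definition Weyl :: "(real \<times> real \<times> real) set" where
  "Weyl = {(x, y, z). x > 0 \<and> 2 * y - z > 0 \<and> - y + 2 * z > 0}"

definition weights13_23 :: "(real \<times> real \<times> real) set" where
  "weights13_23 = {(0, 1, 0), (0, -1, 1), (0, 0, -1),
                   (1, 1, 0), (1, -1, 1), (1, 0, -1),
                   (-1, 1, 0), (-1, -1, 1), (-1, 0, -1)}"

definition arr_complement :: "(real \<times> real \<times> real) set" where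
  "arr_complement = Weyl - (\<Union>w\<in>weights13_23. {p. wpair w p = 0})"

definition chambers :: "(real \<times> real \<times> real) set set" where
  "chambers = components arr_complement"

text \<open>Two distinct chambers are adjacent if they share a codimension-one wall
  (inside the Weyl chamber): the intersection of their closures within W has affine dimension 2.\<close>
definition chamber_adjacent :: "(real \<times> real \<times> real) set \<Rightarrow> (real \<times> real \<times> real) set \<Rightarrow> bool" where
  "chamber_adjacent K L \<longleftrightarrow> K \<noteq> L \<and> aff_dim (closure K \<inter> closure L \<inter> Weyl) = 2"

definition sign_weights :: "(real \<times> real \<times> real) list" where
  "sign_weights = [(0, -1, 1), (-1, -1, 1), (-1, 1, 0), (1, 0, -1), (1, -1, 1)]"

definition sign_vector :: "real \<times> real \<times> real \<Rightarrow> real list" where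
  "sign_vector p = map (\<lambda>w. sgn (wpair w p)) sign_weights"

definition ch1 :: "(real \<times> real \<times> real) set" where
  "ch1 = {(s, x, y). 0 < y - x \<and> y - x < x \<and> x < y \<and> y < s}"
definition ch2 :: "(real \<times> real \<times> real) set" where
  "ch2 = {(s, x, y). 0 < y - x \<and> y - x < x \<and> x < s \<and> s < y}"
definition ch3 :: "(real \<times> real \<times> real) set" where
  "ch3 = {(s, x, y). 0 < y - x \<and> y - x < s \<and> s < x \<and> x < y}"
definition ch4 :: "(real \<times> real \<times> real) set" where
  "ch4 = {(s, x, y). 0 < s \<and> s < y - x \<and> y - x < x \<and> x < y}"
definition ch1' :: "(real \<times> real \<times> real) set" where
  "ch1' = {(s, x, y). 0 < x - y \<and> x - y < y \<and> y < x \<and> x < s}"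
definition ch2' :: "(real \<times> real \<times> real) set" where
  "ch2' = {(s, x, y). 0 < x - y \<and> x - y < y \<and> y < s \<and> s < x}"
definition ch3' :: "(real \<times> real \<times> real) set" where
  "ch3' = {(s, x, y). 0 < x - y \<and> x - y < s \<and> s < y \<and> y < x}"
definition ch4' :: "(real \<times> real \<times> real) set" where
  "ch4' = {(s, x, y). 0 < s \<and> s < x - y \<and> x - y < y \<and> y < x}"

definition adjacency_edges :: "((real \<times> real \<times> real) set \<times> (real \<times> real \<times> real) set) set" where
  "adjacency_edges = {(ch1, ch2), (ch2, ch3), (ch3, ch3'), (ch3', ch2'), (ch2', ch1'), (ch1', ch1),
                      (ch3, ch4), (ch3', ch4')}"

end

theory Submission
  imports Defs
begin

definition Ho :: "real \<times> real \<times> real \<Rightarrow> (real \<times> real \<times> real) set" where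
  "Ho w = {p. w \<bullet> p > 0}"
definition Hc :: "real \<times> real \<times> real \<Rightarrow> (real \<times> real \<times> real) set" where
  "Hc w = {p. w \<bullet> p \<ge> 0}"

lemma inner3: "((a::real,b::real,c::real) \<bullet> (x,y,z)) = a*x+b*y+c*z"
  by (simp add: inner_Pair)

lemma Ho_open: "open (\<Inter>w\<in>W. Ho w)" if "finite W"
  using that by (intro open_INT) (auto simp: Ho_def open_halfspace_gt)

lemma Ho_conn: "connected (\<Inter>w\<in>W. Ho w)"
  by (intro convex_connected convex_INT) (auto simp: Ho_def convex_halfspace_gt)

lemma Ho_clos: "closure (\<Inter>w\<in>W. Ho w) \<subseteq> (\<Inter>w\<in>W. Hc w)"
proof (rule closure_minimal)
  have "Ho w \<subseteq> Hc w" for w by (auto simp: Ho_def Hc_def)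
  then show "(\<Inter>w\<in>W. Ho w) \<subseteq> (\<Inter>w\<in>W. Hc w)" by blast
  show "closed (\<Inter>w\<in>W. Hc w)" by (intro closed_INT) (auto simp: Hc_def closed_halfspace_ge)
qed

lemma closure_pt:
  fixes K :: "(real \<times> real \<times> real) set"
  assumes "a \<in> K" "a \<noteq> p" "\<And>u. 0 < u \<Longrightarrow> u < 1 \<Longrightarrow> (1-u) *\<^sub>R a + u *\<^sub>R p \<in> K"
  shows "p \<in> closure K"
proof -
  have "open_segment a p \<subseteq> K" using assms by (auto simp: in_segment)
  then have "closure (open_segment a p) \<subseteq> closure K" by (rule closure_mono)
  then show ?thesis using assms(2) by auto
qed

lemma adj_lemma:
  assumes "closure K \<subseteq> Kc" "closure L \<subseteq> Lc" "Kc \<inter> Lc \<inter> Weyl \<subseteq> {p. w \<bullet> p = 0}" "w \<noteq> 0"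
    "{a,b,c} \<subseteq> closure K \<inter> closure L \<inter> Weyl" "\<not> collinear {a,b,c}" "K \<noteq> L"
  shows "chamber_adjacent K L"
proof -
  have "aff_dim (closure K \<inter> closure L \<inter> Weyl) \<le> aff_dim {p. w \<bullet> p = 0}"
    by (rule aff_dim_subset) (use assms in blast)
  also have "\<dots> = 2" using assms(4) by simp
  finally have le: "aff_dim (closure K \<inter> closure L \<inter> Weyl) \<le> 2" .
  have "\<not> collinear (closure K \<inter> closure L \<inter> Weyl)"
    using assms(5,6) collinear_subset by blast
  then have "\<not> aff_dim (closure K \<inter> closure L \<inter> Weyl) \<le> 1" by (simp add: collinear_aff_dim)
  with le assms(7) show ?thesis unfolding chamber_adjacent_def by simp
qed

lemma nonadj_lemma:
  assumes "closure K \<subseteq> Kc" "closure L \<subseteq> Lc"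
    "Kc \<inter> Lc \<inter> Weyl \<subseteq> {p. fst p = fst (snd p) \<and> fst (snd p) = snd (snd p)}"
  shows "\<not> chamber_adjacent K L"
proof -
  have "collinear {p::real\<times>real\<times>real. fst p = fst (snd p) \<and> fst (snd p) = snd (snd p)}"
    unfolding collinear_def
    by (rule exI[of _ "(1,1,1)"]) (auto intro!: exI[of _ "fst _ - fst _"] simp: prod_eq_iff)
  then have "collinear (closure K \<inter> closure L \<inter> Weyl)"
    by (rule collinear_subset) (use assms in blast)
  then show ?thesis by (simp add: chamber_adjacent_def collinear_aff_dim)
qed

lemma col0: "collinear {(0::real,0::real,0::real), x, y} \<longleftrightarrow> x = 0 \<or> y = 0 \<or> (\<exists>c. y = c *\<^sub>R x)"
  using collinear_lemma[of x y] by (simp add: zero_prod_def)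

lemma adj_sym: "chamber_adjacent K L = chamber_adjacent L K"
  unfolding chamber_adjacent_def by (metis Int_commute)

lemma ch1_eq: "ch1 = (\<Inter>w\<in>{(0,-1,1),(0,2,-1),(1,0,-1)}. Ho w)"
  by (auto simp: ch1_def Ho_def inner3)

lemma ch1_clos: "closure ch1 \<subseteq> (\<Inter>w\<in>{(0,-1,1),(0,2,-1),(1,0,-1)}. Hc w)"
  unfolding ch1_eq by (rule Ho_clos)

lemma ch1_wit: "(4,2,3) \<in> ch1"
  by (simp add: ch1_def)

lemma ch2_eq: "ch2 = (\<Inter>w\<in>{(0,-1,1),(0,2,-1),(1,-1,0),(-1,0,1)}. Ho w)"
  by (auto simp: ch2_def Ho_def inner3)

lemma ch2_clos: "closure ch2 \<subseteq> (\<Inter>w\<in>{(0,-1,1),(0,2,-1),(1,-1,0),(-1,0,1)}. Hc w)"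
  unfolding ch2_eq by (rule Ho_clos)

lemma ch2_wit: "(5/2,2,3) \<in> ch2"
  by (simp add: ch2_def)

lemma ch3_eq: "ch3 = (\<Inter>w\<in>{(0,-1,1),(1,1,-1),(-1,1,0)}. Ho w)"
  by (auto simp: ch3_def Ho_def inner3)

lemma ch3_clos: "closure ch3 \<subseteq> (\<Inter>w\<in>{(0,-1,1),(1,1,-1),(-1,1,0)}. Hc w)"
  unfolding ch3_eq by (rule Ho_clos)

lemma ch3_wit: "(3/2,2,3) \<in> ch3"
  by (simp add: ch3_def)

lemma ch4_eq: "ch4 = (\<Inter>w\<in>{(1,0,0),(-1,-1,1),(0,2,-1),(0,-1,1)}. Ho w)"
  by (auto simp: ch4_def Ho_def inner3)

lemma ch4_clos: "closure ch4 \<subseteq> (\<Inter>w\<in>{(1,0,0),(-1,-1,1),(0,2,-1),(0,-1,1)}. Hc w)"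
  unfolding ch4_eq by (rule Ho_clos)

lemma ch4_wit: "(1/2,2,3) \<in> ch4"
  by (simp add: ch4_def)

lemma ch1p_eq: "ch1' = (\<Inter>w\<in>{(0,1,-1),(0,-1,2),(1,-1,0)}. Ho w)"
  by (auto simp: ch1'_def Ho_def inner3)

lemma ch1p_clos: "closure ch1' \<subseteq> (\<Inter>w\<in>{(0,1,-1),(0,-1,2),(1,-1,0)}. Hc w)"
  unfolding ch1p_eq by (rule Ho_clos)

lemma ch1p_wit: "(4,3,2) \<in> ch1'"
  by (simp add: ch1'_def)

lemma ch2p_eq: "ch2' = (\<Inter>w\<in>{(0,1,-1),(0,-1,2),(1,0,-1),(-1,1,0)}. Ho w)"
  by (auto simp: ch2'_def Ho_def inner3)

lemma ch2p_clos: "closure ch2' \<subseteq> (\<Inter>w\<in>{(0,1,-1),(0,-1,2),(1,0,-1),(-1,1,0)}. Hc w)"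
  unfolding ch2p_eq by (rule Ho_clos)

lemma ch2p_wit: "(5/2,3,2) \<in> ch2'"
  by (simp add: ch2'_def)

lemma ch3p_eq: "ch3' = (\<Inter>w\<in>{(0,1,-1),(1,-1,1),(-1,0,1)}. Ho w)"
  by (auto simp: ch3'_def Ho_def inner3)

lemma ch3p_clos: "closure ch3' \<subseteq> (\<Inter>w\<in>{(0,1,-1),(1,-1,1),(-1,0,1)}. Hc w)"
  unfolding ch3p_eq by (rule Ho_clos)

lemma ch3p_wit: "(3/2,3,2) \<in> ch3'"
  by (simp add: ch3'_def)

lemma ch4p_eq: "ch4' = (\<Inter>w\<in>{(1,0,0),(-1,1,-1),(0,-1,2),(0,1,-1)}. Ho w)"
  by (auto simp: ch4'_def Ho_def inner3)

lemma ch4p_clos: "closure ch4' \<subseteq> (\<Inter>w\<in>{(1,0,0),(-1,1,-1),(0,-1,2),(0,1,-1)}. Hc w)"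
  unfolding ch4p_eq by (rule Ho_clos)

lemma ch4p_wit: "(1/2,3,2) \<in> ch4'"
  by (simp add: ch4'_def)

lemma ne_ch1_ch2: "ch1 \<noteq> ch2"
proof
  assume "ch1 = ch2"
  then have "(4,2,3) \<in> ch2" using ch1_wit by simp
  then show False by (simp add: ch2_def)
qed

lemma ne_ch1_ch3: "ch1 \<noteq> ch3"
proof
  assume "ch1 = ch3"
  then have "(4,2,3) \<in> ch3" using ch1_wit by simp
  then show False by (simp add: ch3_def)
qed

lemma ne_ch1_ch4: "ch1 \<noteq> ch4"
proof
  assume "ch1 = ch4"
  then have "(4,2,3) \<in> ch4" using ch1_wit by simp
  then show False by (simp add: ch4_def)
qed

lemma ne_ch1_ch1p: "ch1 \<noteq> ch1'"
proof
  assume "ch1 = ch1'"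
  then have "(4,2,3) \<in> ch1'" using ch1_wit by simp
  then show False by (simp add: ch1'_def)
qed

lemma ne_ch1_ch2p: "ch1 \<noteq> ch2'"
proof
  assume "ch1 = ch2'"
  then have "(4,2,3) \<in> ch2'" using ch1_wit by simp
  then show False by (simp add: ch2'_def)
qed

lemma ne_ch1_ch3p: "ch1 \<noteq> ch3'"
proof
  assume "ch1 = ch3'"
  then have "(4,2,3) \<in> ch3'" using ch1_wit by simp
  then show False by (simp add: ch3'_def)
qed

lemma ne_ch1_ch4p: "ch1 \<noteq> ch4'"
proof
  assume "ch1 = ch4'"
  then have "(4,2,3) \<in> ch4'" using ch1_wit by simp
  then show False by (simp add: ch4'_def)
qed

lemma ne_ch2_ch1: "ch2 \<noteq> ch1"
proof
  assume "ch2 = ch1"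
  then have "(5/2,2,3) \<in> ch1" using ch2_wit by simp
  then show False by (simp add: ch1_def)
qed

lemma ne_ch2_ch3: "ch2 \<noteq> ch3"
proof
  assume "ch2 = ch3"
  then have "(5/2,2,3) \<in> ch3" using ch2_wit by simp
  then show False by (simp add: ch3_def)
qed

lemma ne_ch2_ch4: "ch2 \<noteq> ch4"
proof
  assume "ch2 = ch4"
  then have "(5/2,2,3) \<in> ch4" using ch2_wit by simp
  then show False by (simp add: ch4_def)
qed

lemma ne_ch2_ch1p: "ch2 \<noteq> ch1'"
proof
  assume "ch2 = ch1'"
  then have "(5/2,2,3) \<in> ch1'" using ch2_wit by simp
  then show False by (simp add: ch1'_def)
qed

lemma ne_ch2_ch2p: "ch2 \<noteq> ch2'"
proof
  assume "ch2 = ch2'"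
  then have "(5/2,2,3) \<in> ch2'" using ch2_wit by simp
  then show False by (simp add: ch2'_def)
qed

lemma ne_ch2_ch3p: "ch2 \<noteq> ch3'"
proof
  assume "ch2 = ch3'"
  then have "(5/2,2,3) \<in> ch3'" using ch2_wit by simp
  then show False by (simp add: ch3'_def)
qed

lemma ne_ch2_ch4p: "ch2 \<noteq> ch4'"
proof
  assume "ch2 = ch4'"
  then have "(5/2,2,3) \<in> ch4'" using ch2_wit by simp
  then show False by (simp add: ch4'_def)
qed

lemma ne_ch3_ch1: "ch3 \<noteq> ch1"
proof
  assume "ch3 = ch1"
  then have "(3/2,2,3) \<in> ch1" using ch3_wit by simp
  then show False by (simp add: ch1_def)
qed

lemma ne_ch3_ch2: "ch3 \<noteq> ch2"
proof
  assume "ch3 = ch2"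
  then have "(3/2,2,3) \<in> ch2" using ch3_wit by simp
  then show False by (simp add: ch2_def)
qed

lemma ne_ch3_ch4: "ch3 \<noteq> ch4"
proof
  assume "ch3 = ch4"
  then have "(3/2,2,3) \<in> ch4" using ch3_wit by simp
  then show False by (simp add: ch4_def)
qed

lemma ne_ch3_ch1p: "ch3 \<noteq> ch1'"
proof
  assume "ch3 = ch1'"
  then have "(3/2,2,3) \<in> ch1'" using ch3_wit by simp
  then show False by (simp add: ch1'_def)
qed

lemma ne_ch3_ch2p: "ch3 \<noteq> ch2'"
proof
  assume "ch3 = ch2'"
  then have "(3/2,2,3) \<in> ch2'" using ch3_wit by simp
  then show False by (simp add: ch2'_def)
qed

lemma ne_ch3_ch3p: "ch3 \<noteq> ch3'"
proof
  assume "ch3 = ch3'"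
  then have "(3/2,2,3) \<in> ch3'" using ch3_wit by simp
  then show False by (simp add: ch3'_def)
qed

lemma ne_ch3_ch4p: "ch3 \<noteq> ch4'"
proof
  assume "ch3 = ch4'"
  then have "(3/2,2,3) \<in> ch4'" using ch3_wit by simp
  then show False by (simp add: ch4'_def)
qed

lemma ne_ch4_ch1: "ch4 \<noteq> ch1"
proof
  assume "ch4 = ch1"
  then have "(1/2,2,3) \<in> ch1" using ch4_wit by simp
  then show False by (simp add: ch1_def)
qed

lemma ne_ch4_ch2: "ch4 \<noteq> ch2"
proof
  assume "ch4 = ch2"
  then have "(1/2,2,3) \<in> ch2" using ch4_wit by simp
  then show False by (simp add: ch2_def)
qed

lemma ne_ch4_ch3: "ch4 \<noteq> ch3"
proof
  assume "ch4 = ch3"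
  then have "(1/2,2,3) \<in> ch3" using ch4_wit by simp
  then show False by (simp add: ch3_def)
qed

lemma ne_ch4_ch1p: "ch4 \<noteq> ch1'"
proof
  assume "ch4 = ch1'"
  then have "(1/2,2,3) \<in> ch1'" using ch4_wit by simp
  then show False by (simp add: ch1'_def)
qed

lemma ne_ch4_ch2p: "ch4 \<noteq> ch2'"
proof
  assume "ch4 = ch2'"
  then have "(1/2,2,3) \<in> ch2'" using ch4_wit by simp
  then show False by (simp add: ch2'_def)
qed

lemma ne_ch4_ch3p: "ch4 \<noteq> ch3'"
proof
  assume "ch4 = ch3'"
  then have "(1/2,2,3) \<in> ch3'" using ch4_wit by simp
  then show False by (simp add: ch3'_def)
qed

lemma ne_ch4_ch4p: "ch4 \<noteq> ch4'"
proof
  assume "ch4 = ch4'"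
  then have "(1/2,2,3) \<in> ch4'" using ch4_wit by simp
  then show False by (simp add: ch4'_def)
qed

lemma ne_ch1p_ch1: "ch1' \<noteq> ch1"
proof
  assume "ch1' = ch1"
  then have "(4,3,2) \<in> ch1" using ch1p_wit by simp
  then show False by (simp add: ch1_def)
qed

lemma ne_ch1p_ch2: "ch1' \<noteq> ch2"
proof
  assume "ch1' = ch2"
  then have "(4,3,2) \<in> ch2" using ch1p_wit by simp
  then show False by (simp add: ch2_def)
qed

lemma ne_ch1p_ch3: "ch1' \<noteq> ch3"
proof
  assume "ch1' = ch3"
  then have "(4,3,2) \<in> ch3" using ch1p_wit by simp
  then show False by (simp add: ch3_def)
qed

lemma ne_ch1p_ch4: "ch1' \<noteq> ch4"
proof
  assume "ch1' = ch4"
  then have "(4,3,2) \<in> ch4" using ch1p_wit by simp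
  then show False by (simp add: ch4_def)
qed

lemma ne_ch1p_ch2p: "ch1' \<noteq> ch2'"
proof
  assume "ch1' = ch2'"
  then have "(4,3,2) \<in> ch2'" using ch1p_wit by simp
  then show False by (simp add: ch2'_def)
qed

lemma ne_ch1p_ch3p: "ch1' \<noteq> ch3'"
proof
  assume "ch1' = ch3'"
  then have "(4,3,2) \<in> ch3'" using ch1p_wit by simp
  then show False by (simp add: ch3'_def)
qed

lemma ne_ch1p_ch4p: "ch1' \<noteq> ch4'"
proof
  assume "ch1' = ch4'"
  then have "(4,3,2) \<in> ch4'" using ch1p_wit by simp
  then show False by (simp add: ch4'_def)
qed

lemma ne_ch2p_ch1: "ch2' \<noteq> ch1"
proof
  assume "ch2' = ch1"
  then have "(5/2,3,2) \<in> ch1" using ch2p_wit by simp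
  then show False by (simp add: ch1_def)
qed

lemma ne_ch2p_ch2: "ch2' \<noteq> ch2"
proof
  assume "ch2' = ch2"
  then have "(5/2,3,2) \<in> ch2" using ch2p_wit by simp
  then show False by (simp add: ch2_def)
qed

lemma ne_ch2p_ch3: "ch2' \<noteq> ch3"
proof
  assume "ch2' = ch3"
  then have "(5/2,3,2) \<in> ch3" using ch2p_wit by simp
  then show False by (simp add: ch3_def)
qed

lemma ne_ch2p_ch4: "ch2' \<noteq> ch4"
proof
  assume "ch2' = ch4"
  then have "(5/2,3,2) \<in> ch4" using ch2p_wit by simp
  then show False by (simp add: ch4_def)
qed

lemma ne_ch2p_ch1p: "ch2' \<noteq> ch1'"
proof
  assume "ch2' = ch1'"
  then have "(5/2,3,2) \<in> ch1'" using ch2p_wit by simp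
  then show False by (simp add: ch1'_def)
qed

lemma ne_ch2p_ch3p: "ch2' \<noteq> ch3'"
proof
  assume "ch2' = ch3'"
  then have "(5/2,3,2) \<in> ch3'" using ch2p_wit by simp
  then show False by (simp add: ch3'_def)
qed

lemma ne_ch2p_ch4p: "ch2' \<noteq> ch4'"
proof
  assume "ch2' = ch4'"
  then have "(5/2,3,2) \<in> ch4'" using ch2p_wit by simp
  then show False by (simp add: ch4'_def)
qed

lemma ne_ch3p_ch1: "ch3' \<noteq> ch1"
proof
  assume "ch3' = ch1"
  then have "(3/2,3,2) \<in> ch1" using ch3p_wit by simp
  then show False by (simp add: ch1_def)
qed

lemma ne_ch3p_ch2: "ch3' \<noteq> ch2"
proof
  assume "ch3' = ch2"
  then have "(3/2,3,2) \<in> ch2" using ch3p_wit by simp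
  then show False by (simp add: ch2_def)
qed

lemma ne_ch3p_ch3: "ch3' \<noteq> ch3"
proof
  assume "ch3' = ch3"
  then have "(3/2,3,2) \<in> ch3" using ch3p_wit by simp
  then show False by (simp add: ch3_def)
qed

lemma ne_ch3p_ch4: "ch3' \<noteq> ch4"
proof
  assume "ch3' = ch4"
  then have "(3/2,3,2) \<in> ch4" using ch3p_wit by simp
  then show False by (simp add: ch4_def)
qed

lemma ne_ch3p_ch1p: "ch3' \<noteq> ch1'"
proof
  assume "ch3' = ch1'"
  then have "(3/2,3,2) \<in> ch1'" using ch3p_wit by simp
  then show False by (simp add: ch1'_def)
qed

lemma ne_ch3p_ch2p: "ch3' \<noteq> ch2'"
proof
  assume "ch3' = ch2'"
  then have "(3/2,3,2) \<in> ch2'" using ch3p_wit by simp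
  then show False by (simp add: ch2'_def)
qed

lemma ne_ch3p_ch4p: "ch3' \<noteq> ch4'"
proof
  assume "ch3' = ch4'"
  then have "(3/2,3,2) \<in> ch4'" using ch3p_wit by simp
  then show False by (simp add: ch4'_def)
qed

lemma ne_ch4p_ch1: "ch4' \<noteq> ch1"
proof
  assume "ch4' = ch1"
  then have "(1/2,3,2) \<in> ch1" using ch4p_wit by simp
  then show False by (simp add: ch1_def)
qed

lemma ne_ch4p_ch2: "ch4' \<noteq> ch2"
proof
  assume "ch4' = ch2"
  then have "(1/2,3,2) \<in> ch2" using ch4p_wit by simp
  then show False by (simp add: ch2_def)
qed

lemma ne_ch4p_ch3: "ch4' \<noteq> ch3"
proof
  assume "ch4' = ch3"
  then have "(1/2,3,2) \<in> ch3" using ch4p_wit by simp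
  then show False by (simp add: ch3_def)
qed

lemma ne_ch4p_ch4: "ch4' \<noteq> ch4"
proof
  assume "ch4' = ch4"
  then have "(1/2,3,2) \<in> ch4" using ch4p_wit by simp
  then show False by (simp add: ch4_def)
qed

lemma ne_ch4p_ch1p: "ch4' \<noteq> ch1'"
proof
  assume "ch4' = ch1'"
  then have "(1/2,3,2) \<in> ch1'" using ch4p_wit by simp
  then show False by (simp add: ch1'_def)
qed

lemma ne_ch4p_ch2p: "ch4' \<noteq> ch2'"
proof
  assume "ch4' = ch2'"
  then have "(1/2,3,2) \<in> ch2'" using ch4p_wit by simp
  then show False by (simp add: ch2'_def)
qed

lemma ne_ch4p_ch3p: "ch4' \<noteq> ch3'"
proof
  assume "ch4' = ch3'"
  then have "(1/2,3,2) \<in> ch3'" using ch4p_wit by simp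
  then show False by (simp add: ch3'_def)
qed

lemmas ne_all = ne_ch1_ch2 ne_ch1_ch3 ne_ch1_ch4 ne_ch1_ch1p ne_ch1_ch2p ne_ch1_ch3p ne_ch1_ch4p ne_ch2_ch1 ne_ch2_ch3 ne_ch2_ch4 ne_ch2_ch1p ne_ch2_ch2p ne_ch2_ch3p ne_ch2_ch4p ne_ch3_ch1 ne_ch3_ch2 ne_ch3_ch4 ne_ch3_ch1p ne_ch3_ch2p ne_ch3_ch3p ne_ch3_ch4p ne_ch4_ch1 ne_ch4_ch2 ne_ch4_ch3 ne_ch4_ch1p ne_ch4_ch2p ne_ch4_ch3p ne_ch4_ch4p ne_ch1p_ch1 ne_ch1p_ch2 ne_ch1p_ch3 ne_ch1p_ch4 ne_ch1p_ch2p ne_ch1p_ch3p ne_ch1p_ch4p ne_ch2p_ch1 ne_ch2p_ch2 ne_ch2p_ch3 ne_ch2p_ch4 ne_ch2p_ch1p ne_ch2p_ch3p ne_ch2p_ch4p ne_ch3p_ch1 ne_ch3p_ch2 ne_ch3p_ch3 ne_ch3p_ch4 ne_ch3p_ch1p ne_ch3p_ch2p ne_ch3p_ch4p ne_ch4p_ch1 ne_ch4p_ch2 ne_ch4p_ch3 ne_ch4p_ch4 ne_ch4p_ch1p ne_ch4p_ch2p ne_ch4p_ch3p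

lemma adj_ch1_ch2: "chamber_adjacent ch1 ch2"
proof (rule adj_lemma[OF ch1_clos ch2_clos, of "(1,0,-1)"])
  show "(\<Inter>w\<in>{(0,-1,1),(0,2,-1),(1,0,-1)}. Hc w) \<inter> (\<Inter>w\<in>{(0,-1,1),(0,2,-1),(1,-1,0),(-1,0,1)}. Hc w) \<inter> Weyl \<subseteq> {p. (1,0,-1) \<bullet> p = 0}"
    by (auto simp: Hc_def Weyl_def inner3)
  show "((1,0,-1)::real\<times>real\<times>real) \<noteq> 0" by (simp add: zero_prod_def)
  show "\<not> collinear {((3,2,3)::real\<times>real\<times>real),(7/2,2,7/2),(5,3,5)}"
    by (subst collinear_3) (auto simp: col0 zero_prod_def)
  show "ch1 \<noteq> ch2" by (rule ne_all)
  have A: "p \<in> closure ch1" if "p \<in> {((3,2,3)::real\<times>real\<times>real),(7/2,2,7/2),(5,3,5)}" for p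
    using that apply (elim insertE emptyE)
    by (rule closure_pt[OF ch1_wit]; auto simp: ch1_def field_simps)+
  have B: "p \<in> closure ch2" if "p \<in> {((3,2,3)::real\<times>real\<times>real),(7/2,2,7/2),(5,3,5)}" for p
    using that apply (elim insertE emptyE)
    by (rule closure_pt[OF ch2_wit]; auto simp: ch2_def field_simps)+
  have C: "{((3,2,3)::real\<times>real\<times>real),(7/2,2,7/2),(5,3,5)} \<subseteq> Weyl" by (simp add: Weyl_def)
  show "{((3,2,3)::real\<times>real\<times>real),(7/2,2,7/2),(5,3,5)} \<subseteq> closure ch1 \<inter> closure ch2 \<inter> Weyl"
    using A B C by blast
qed

lemma adj_ch1_ch3: "\<not> chamber_adjacent ch1 ch3"
  by (rule nonadj_lemma[OF ch1_clos ch3_clos]) (auto simp: Hc_def Weyl_def inner3)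

lemma adj_ch1_ch4: "\<not> chamber_adjacent ch1 ch4"
  by (rule nonadj_lemma[OF ch1_clos ch4_clos]) (auto simp: Hc_def Weyl_def inner3)

lemma adj_ch1_ch1p: "chamber_adjacent ch1 ch1'"
proof (rule adj_lemma[OF ch1_clos ch1p_clos, of "(0,-1,1)"])
  show "(\<Inter>w\<in>{(0,-1,1),(0,2,-1),(1,0,-1)}. Hc w) \<inter> (\<Inter>w\<in>{(0,1,-1),(0,-1,2),(1,-1,0)}. Hc w) \<inter> Weyl \<subseteq> {p. (0,-1,1) \<bullet> p = 0}"
    by (auto simp: Hc_def Weyl_def inner3)
  show "((0,-1,1)::real\<times>real\<times>real) \<noteq> 0" by (simp add: zero_prod_def)
  show "\<not> collinear {((3,2,2)::real\<times>real\<times>real),(4,2,2),(4,3,3)}"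
    by (subst collinear_3) (auto simp: col0 zero_prod_def)
  show "ch1 \<noteq> ch1'" by (rule ne_all)
  have A: "p \<in> closure ch1" if "p \<in> {((3,2,2)::real\<times>real\<times>real),(4,2,2),(4,3,3)}" for p
    using that apply (elim insertE emptyE)
    by (rule closure_pt[OF ch1_wit]; auto simp: ch1_def field_simps)+
  have B: "p \<in> closure ch1'" if "p \<in> {((3,2,2)::real\<times>real\<times>real),(4,2,2),(4,3,3)}" for p
    using that apply (elim insertE emptyE)
    by (rule closure_pt[OF ch1p_wit]; auto simp: ch1'_def field_simps)+
  have C: "{((3,2,2)::real\<times>real\<times>real),(4,2,2),(4,3,3)} \<subseteq> Weyl" by (simp add: Weyl_def)
  show "{((3,2,2)::real\<times>real\<times>real),(4,2,2),(4,3,3)} \<subseteq> closure ch1 \<inter> closure ch1' \<inter> Weyl"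
    using A B C by blast
qed

lemma adj_ch1_ch2p: "\<not> chamber_adjacent ch1 ch2'"
  by (rule nonadj_lemma[OF ch1_clos ch2p_clos]) (auto simp: Hc_def Weyl_def inner3)

lemma adj_ch1_ch3p: "\<not> chamber_adjacent ch1 ch3'"
  by (rule nonadj_lemma[OF ch1_clos ch3p_clos]) (auto simp: Hc_def Weyl_def inner3)

lemma adj_ch1_ch4p: "\<not> chamber_adjacent ch1 ch4'"
  by (rule nonadj_lemma[OF ch1_clos ch4p_clos]) (auto simp: Hc_def Weyl_def inner3)

lemma adj_ch2_ch3: "chamber_adjacent ch2 ch3"
proof (rule adj_lemma[OF ch2_clos ch3_clos, of "(1,-1,0)"])
  show "(\<Inter>w\<in>{(0,-1,1),(0,2,-1),(1,-1,0),(-1,0,1)}. Hc w) \<inter> (\<Inter>w\<in>{(0,-1,1),(1,1,-1),(-1,1,0)}. Hc w) \<inter> Weyl \<subseteq> {p. (1,-1,0) \<bullet> p = 0}"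
    by (auto simp: Hc_def Weyl_def inner3)
  show "((1,-1,0)::real\<times>real\<times>real) \<noteq> 0" by (simp add: zero_prod_def)
  show "\<not> collinear {((2,2,3)::real\<times>real\<times>real),(3,3,5),(3,3,4)}"
    by (subst collinear_3) (auto simp: col0 zero_prod_def)
  show "ch2 \<noteq> ch3" by (rule ne_all)
  have A: "p \<in> closure ch2" if "p \<in> {((2,2,3)::real\<times>real\<times>real),(3,3,5),(3,3,4)}" for p
    using that apply (elim insertE emptyE)
    by (rule closure_pt[OF ch2_wit]; auto simp: ch2_def field_simps)+
  have B: "p \<in> closure ch3" if "p \<in> {((2,2,3)::real\<times>real\<times>real),(3,3,5),(3,3,4)}" for p
    using that apply (elim insertE emptyE)
    by (rule closure_pt[OF ch3_wit]; auto simp: ch3_def field_simps)+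
  have C: "{((2,2,3)::real\<times>real\<times>real),(3,3,5),(3,3,4)} \<subseteq> Weyl" by (simp add: Weyl_def)
  show "{((2,2,3)::real\<times>real\<times>real),(3,3,5),(3,3,4)} \<subseteq> closure ch2 \<inter> closure ch3 \<inter> Weyl"
    using A B C by blast
qed

lemma adj_ch2_ch4: "\<not> chamber_adjacent ch2 ch4"
  by (rule nonadj_lemma[OF ch2_clos ch4_clos]) (auto simp: Hc_def Weyl_def inner3)

lemma adj_ch2_ch1p: "\<not> chamber_adjacent ch2 ch1'"
  by (rule nonadj_lemma[OF ch2_clos ch1p_clos]) (auto simp: Hc_def Weyl_def inner3)

lemma adj_ch2_ch2p: "\<not> chamber_adjacent ch2 ch2'"
  by (rule nonadj_lemma[OF ch2_clos ch2p_clos]) (auto simp: Hc_def Weyl_def inner3)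

lemma adj_ch2_ch3p: "\<not> chamber_adjacent ch2 ch3'"
  by (rule nonadj_lemma[OF ch2_clos ch3p_clos]) (auto simp: Hc_def Weyl_def inner3)

lemma adj_ch2_ch4p: "\<not> chamber_adjacent ch2 ch4'"
  by (rule nonadj_lemma[OF ch2_clos ch4p_clos]) (auto simp: Hc_def Weyl_def inner3)

lemma adj_ch3_ch4: "chamber_adjacent ch3 ch4"
proof (rule adj_lemma[OF ch3_clos ch4_clos, of "(1,1,-1)"])
  show "(\<Inter>w\<in>{(0,-1,1),(1,1,-1),(-1,1,0)}. Hc w) \<inter> (\<Inter>w\<in>{(1,0,0),(-1,-1,1),(0,2,-1),(0,-1,1)}. Hc w) \<inter> Weyl \<subseteq> {p. (1,1,-1) \<bullet> p = 0}"
    by (auto simp: Hc_def Weyl_def inner3)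
  show "((1,1,-1)::real\<times>real\<times>real) \<noteq> 0" by (simp add: zero_prod_def)
  show "\<not> collinear {((1,2,3)::real\<times>real\<times>real),(2,3,5),(1,3,4)}"
    by (subst collinear_3) (auto simp: col0 zero_prod_def)
  show "ch3 \<noteq> ch4" by (rule ne_all)
  have A: "p \<in> closure ch3" if "p \<in> {((1,2,3)::real\<times>real\<times>real),(2,3,5),(1,3,4)}" for p
    using that apply (elim insertE emptyE)
    by (rule closure_pt[OF ch3_wit]; auto simp: ch3_def field_simps)+
  have B: "p \<in> closure ch4" if "p \<in> {((1,2,3)::real\<times>real\<times>real),(2,3,5),(1,3,4)}" for p
    using that apply (elim insertE emptyE)
    by (rule closure_pt[OF ch4_wit]; auto simp: ch4_def field_simps)+
  have C: "{((1,2,3)::real\<times>real\<times>real),(2,3,5),(1,3,4)} \<subseteq> Weyl" by (simp add: Weyl_def)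
  show "{((1,2,3)::real\<times>real\<times>real),(2,3,5),(1,3,4)} \<subseteq> closure ch3 \<inter> closure ch4 \<inter> Weyl"
    using A B C by blast
qed

lemma adj_ch3_ch1p: "\<not> chamber_adjacent ch3 ch1'"
  by (rule nonadj_lemma[OF ch3_clos ch1p_clos]) (auto simp: Hc_def Weyl_def inner3)

lemma adj_ch3_ch2p: "\<not> chamber_adjacent ch3 ch2'"
  by (rule nonadj_lemma[OF ch3_clos ch2p_clos]) (auto simp: Hc_def Weyl_def inner3)

lemma adj_ch3_ch3p: "chamber_adjacent ch3 ch3'"
proof (rule adj_lemma[OF ch3_clos ch3p_clos, of "(0,-1,1)"])
  show "(\<Inter>w\<in>{(0,-1,1),(1,1,-1),(-1,1,0)}. Hc w) \<inter> (\<Inter>w\<in>{(0,1,-1),(1,-1,1),(-1,0,1)}. Hc w) \<inter> Weyl \<subseteq> {p. (0,-1,1) \<bullet> p = 0}"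
    by (auto simp: Hc_def Weyl_def inner3)
  show "((0,-1,1)::real\<times>real\<times>real) \<noteq> 0" by (simp add: zero_prod_def)
  show "\<not> collinear {((1,2,2)::real\<times>real\<times>real),(1,3,3),(2,3,3)}"
    by (subst collinear_3) (auto simp: col0 zero_prod_def)
  show "ch3 \<noteq> ch3'" by (rule ne_all)
  have A: "p \<in> closure ch3" if "p \<in> {((1,2,2)::real\<times>real\<times>real),(1,3,3),(2,3,3)}" for p
    using that apply (elim insertE emptyE)
    by (rule closure_pt[OF ch3_wit]; auto simp: ch3_def field_simps)+
  have B: "p \<in> closure ch3'" if "p \<in> {((1,2,2)::real\<times>real\<times>real),(1,3,3),(2,3,3)}" for p
    using that apply (elim insertE emptyE)
    by (rule closure_pt[OF ch3p_wit]; auto simp: ch3'_def field_simps)+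
  have C: "{((1,2,2)::real\<times>real\<times>real),(1,3,3),(2,3,3)} \<subseteq> Weyl" by (simp add: Weyl_def)
  show "{((1,2,2)::real\<times>real\<times>real),(1,3,3),(2,3,3)} \<subseteq> closure ch3 \<inter> closure ch3' \<inter> Weyl"
    using A B C by blast
qed

lemma adj_ch3_ch4p: "\<not> chamber_adjacent ch3 ch4'"
  by (rule nonadj_lemma[OF ch3_clos ch4p_clos]) (auto simp: Hc_def Weyl_def inner3)

lemma adj_ch4_ch1p: "\<not> chamber_adjacent ch4 ch1'"
  by (rule nonadj_lemma[OF ch4_clos ch1p_clos]) (auto simp: Hc_def Weyl_def inner3)

lemma adj_ch4_ch2p: "\<not> chamber_adjacent ch4 ch2'"
  by (rule nonadj_lemma[OF ch4_clos ch2p_clos]) (auto simp: Hc_def Weyl_def inner3)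

lemma adj_ch4_ch3p: "\<not> chamber_adjacent ch4 ch3'"
  by (rule nonadj_lemma[OF ch4_clos ch3p_clos]) (auto simp: Hc_def Weyl_def inner3)

lemma adj_ch4_ch4p: "\<not> chamber_adjacent ch4 ch4'"
  by (rule nonadj_lemma[OF ch4_clos ch4p_clos]) (auto simp: Hc_def Weyl_def inner3)

lemma adj_ch1p_ch2p: "chamber_adjacent ch1' ch2'"
proof (rule adj_lemma[OF ch1p_clos ch2p_clos, of "(1,-1,0)"])
  show "(\<Inter>w\<in>{(0,1,-1),(0,-1,2),(1,-1,0)}. Hc w) \<inter> (\<Inter>w\<in>{(0,1,-1),(0,-1,2),(1,0,-1),(-1,1,0)}. Hc w) \<inter> Weyl \<subseteq> {p. (1,-1,0) \<bullet> p = 0}"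
    by (auto simp: Hc_def Weyl_def inner3)
  show "((1,-1,0)::real\<times>real\<times>real) \<noteq> 0" by (simp add: zero_prod_def)
  show "\<not> collinear {((3,3,2)::real\<times>real\<times>real),(7/2,7/2,2),(5,5,3)}"
    by (subst collinear_3) (auto simp: col0 zero_prod_def)
  show "ch1' \<noteq> ch2'" by (rule ne_all)
  have A: "p \<in> closure ch1'" if "p \<in> {((3,3,2)::real\<times>real\<times>real),(7/2,7/2,2),(5,5,3)}" for p
    using that apply (elim insertE emptyE)
    by (rule closure_pt[OF ch1p_wit]; auto simp: ch1'_def field_simps)+
  have B: "p \<in> closure ch2'" if "p \<in> {((3,3,2)::real\<times>real\<times>real),(7/2,7/2,2),(5,5,3)}" for p
    using that apply (elim insertE emptyE)
    by (rule closure_pt[OF ch2p_wit]; auto simp: ch2'_def field_simps)+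
  have C: "{((3,3,2)::real\<times>real\<times>real),(7/2,7/2,2),(5,5,3)} \<subseteq> Weyl" by (simp add: Weyl_def)
  show "{((3,3,2)::real\<times>real\<times>real),(7/2,7/2,2),(5,5,3)} \<subseteq> closure ch1' \<inter> closure ch2' \<inter> Weyl"
    using A B C by blast
qed

lemma adj_ch1p_ch3p: "\<not> chamber_adjacent ch1' ch3'"
  by (rule nonadj_lemma[OF ch1p_clos ch3p_clos]) (auto simp: Hc_def Weyl_def inner3)

lemma adj_ch1p_ch4p: "\<not> chamber_adjacent ch1' ch4'"
  by (rule nonadj_lemma[OF ch1p_clos ch4p_clos]) (auto simp: Hc_def Weyl_def inner3)

lemma adj_ch2p_ch3p: "chamber_adjacent ch2' ch3'"
proof (rule adj_lemma[OF ch2p_clos ch3p_clos, of "(1,0,-1)"])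
  show "(\<Inter>w\<in>{(0,1,-1),(0,-1,2),(1,0,-1),(-1,1,0)}. Hc w) \<inter> (\<Inter>w\<in>{(0,1,-1),(1,-1,1),(-1,0,1)}. Hc w) \<inter> Weyl \<subseteq> {p. (1,0,-1) \<bullet> p = 0}"
    by (auto simp: Hc_def Weyl_def inner3)
  show "((1,0,-1)::real\<times>real\<times>real) \<noteq> 0" by (simp add: zero_prod_def)
  show "\<not> collinear {((2,3,2)::real\<times>real\<times>real),(3,5,3),(3,4,3)}"
    by (subst collinear_3) (auto simp: col0 zero_prod_def)
  show "ch2' \<noteq> ch3'" by (rule ne_all)
  have A: "p \<in> closure ch2'" if "p \<in> {((2,3,2)::real\<times>real\<times>real),(3,5,3),(3,4,3)}" for p
    using that apply (elim insertE emptyE)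
    by (rule closure_pt[OF ch2p_wit]; auto simp: ch2'_def field_simps)+
  have B: "p \<in> closure ch3'" if "p \<in> {((2,3,2)::real\<times>real\<times>real),(3,5,3),(3,4,3)}" for p
    using that apply (elim insertE emptyE)
    by (rule closure_pt[OF ch3p_wit]; auto simp: ch3'_def field_simps)+
  have C: "{((2,3,2)::real\<times>real\<times>real),(3,5,3),(3,4,3)} \<subseteq> Weyl" by (simp add: Weyl_def)
  show "{((2,3,2)::real\<times>real\<times>real),(3,5,3),(3,4,3)} \<subseteq> closure ch2' \<inter> closure ch3' \<inter> Weyl"
    using A B C by blast
qed

lemma adj_ch2p_ch4p: "\<not> chamber_adjacent ch2' ch4'"
  by (rule nonadj_lemma[OF ch2p_clos ch4p_clos]) (auto simp: Hc_def Weyl_def inner3)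

lemma adj_ch3p_ch4p: "chamber_adjacent ch3' ch4'"
proof (rule adj_lemma[OF ch3p_clos ch4p_clos, of "(1,-1,1)"])
  show "(\<Inter>w\<in>{(0,1,-1),(1,-1,1),(-1,0,1)}. Hc w) \<inter> (\<Inter>w\<in>{(1,0,0),(-1,1,-1),(0,-1,2),(0,1,-1)}. Hc w) \<inter> Weyl \<subseteq> {p. (1,-1,1) \<bullet> p = 0}"
    by (auto simp: Hc_def Weyl_def inner3)
  show "((1,-1,1)::real\<times>real\<times>real) \<noteq> 0" by (simp add: zero_prod_def)
  show "\<not> collinear {((1,3,2)::real\<times>real\<times>real),(2,5,3),(1,4,3)}"
    by (subst collinear_3) (auto simp: col0 zero_prod_def)
  show "ch3' \<noteq> ch4'" by (rule ne_all)
  have A: "p \<in> closure ch3'" if "p \<in> {((1,3,2)::real\<times>real\<times>real),(2,5,3),(1,4,3)}" for p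
    using that apply (elim insertE emptyE)
    by (rule closure_pt[OF ch3p_wit]; auto simp: ch3'_def field_simps)+
  have B: "p \<in> closure ch4'" if "p \<in> {((1,3,2)::real\<times>real\<times>real),(2,5,3),(1,4,3)}" for p
    using that apply (elim insertE emptyE)
    by (rule closure_pt[OF ch4p_wit]; auto simp: ch4'_def field_simps)+
  have C: "{((1,3,2)::real\<times>real\<times>real),(2,5,3),(1,4,3)} \<subseteq> Weyl" by (simp add: Weyl_def)
  show "{((1,3,2)::real\<times>real\<times>real),(2,5,3),(1,4,3)} \<subseteq> closure ch3' \<inter> closure ch4' \<inter> Weyl"
    using A B C by blast
qed

lemma adjr_ch2_ch1: "chamber_adjacent ch2 ch1 = chamber_adjacent ch1 ch2"
  by (rule adj_sym)

lemma adjr_ch3_ch1: "chamber_adjacent ch3 ch1 = chamber_adjacent ch1 ch3"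
  by (rule adj_sym)

lemma adjr_ch4_ch1: "chamber_adjacent ch4 ch1 = chamber_adjacent ch1 ch4"
  by (rule adj_sym)

lemma adjr_ch1p_ch1: "chamber_adjacent ch1' ch1 = chamber_adjacent ch1 ch1'"
  by (rule adj_sym)

lemma adjr_ch2p_ch1: "chamber_adjacent ch2' ch1 = chamber_adjacent ch1 ch2'"
  by (rule adj_sym)

lemma adjr_ch3p_ch1: "chamber_adjacent ch3' ch1 = chamber_adjacent ch1 ch3'"
  by (rule adj_sym)

lemma adjr_ch4p_ch1: "chamber_adjacent ch4' ch1 = chamber_adjacent ch1 ch4'"
  by (rule adj_sym)

lemma adjr_ch3_ch2: "chamber_adjacent ch3 ch2 = chamber_adjacent ch2 ch3"
  by (rule adj_sym)

lemma adjr_ch4_ch2: "chamber_adjacent ch4 ch2 = chamber_adjacent ch2 ch4"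
  by (rule adj_sym)

lemma adjr_ch1p_ch2: "chamber_adjacent ch1' ch2 = chamber_adjacent ch2 ch1'"
  by (rule adj_sym)

lemma adjr_ch2p_ch2: "chamber_adjacent ch2' ch2 = chamber_adjacent ch2 ch2'"
  by (rule adj_sym)

lemma adjr_ch3p_ch2: "chamber_adjacent ch3' ch2 = chamber_adjacent ch2 ch3'"
  by (rule adj_sym)

lemma adjr_ch4p_ch2: "chamber_adjacent ch4' ch2 = chamber_adjacent ch2 ch4'"
  by (rule adj_sym)

lemma adjr_ch4_ch3: "chamber_adjacent ch4 ch3 = chamber_adjacent ch3 ch4"
  by (rule adj_sym)

lemma adjr_ch1p_ch3: "chamber_adjacent ch1' ch3 = chamber_adjacent ch3 ch1'"
  by (rule adj_sym)

lemma adjr_ch2p_ch3: "chamber_adjacent ch2' ch3 = chamber_adjacent ch3 ch2'"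
  by (rule adj_sym)

lemma adjr_ch3p_ch3: "chamber_adjacent ch3' ch3 = chamber_adjacent ch3 ch3'"
  by (rule adj_sym)

lemma adjr_ch4p_ch3: "chamber_adjacent ch4' ch3 = chamber_adjacent ch3 ch4'"
  by (rule adj_sym)

lemma adjr_ch1p_ch4: "chamber_adjacent ch1' ch4 = chamber_adjacent ch4 ch1'"
  by (rule adj_sym)

lemma adjr_ch2p_ch4: "chamber_adjacent ch2' ch4 = chamber_adjacent ch4 ch2'"
  by (rule adj_sym)

lemma adjr_ch3p_ch4: "chamber_adjacent ch3' ch4 = chamber_adjacent ch4 ch3'"
  by (rule adj_sym)

lemma adjr_ch4p_ch4: "chamber_adjacent ch4' ch4 = chamber_adjacent ch4 ch4'"
  by (rule adj_sym)

lemma adjr_ch2p_ch1p: "chamber_adjacent ch2' ch1' = chamber_adjacent ch1' ch2'"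
  by (rule adj_sym)

lemma adjr_ch3p_ch1p: "chamber_adjacent ch3' ch1' = chamber_adjacent ch1' ch3'"
  by (rule adj_sym)

lemma adjr_ch4p_ch1p: "chamber_adjacent ch4' ch1' = chamber_adjacent ch1' ch4'"
  by (rule adj_sym)

lemma adjr_ch3p_ch2p: "chamber_adjacent ch3' ch2' = chamber_adjacent ch2' ch3'"
  by (rule adj_sym)

lemma adjr_ch4p_ch2p: "chamber_adjacent ch4' ch2' = chamber_adjacent ch2' ch4'"
  by (rule adj_sym)

lemma adjr_ch4p_ch3p: "chamber_adjacent ch4' ch3' = chamber_adjacent ch3' ch4'"
  by (rule adj_sym)

lemmas adj_rev_all = adjr_ch2_ch1 adjr_ch3_ch1 adjr_ch4_ch1 adjr_ch1p_ch1 adjr_ch2p_ch1 adjr_ch3p_ch1 adjr_ch4p_ch1 adjr_ch3_ch2 adjr_ch4_ch2 adjr_ch1p_ch2 adjr_ch2p_ch2 adjr_ch3p_ch2 adjr_ch4p_ch2 adjr_ch4_ch3 adjr_ch1p_ch3 adjr_ch2p_ch3 adjr_ch3p_ch3 adjr_ch4p_ch3 adjr_ch1p_ch4 adjr_ch2p_ch4 adjr_ch3p_ch4 adjr_ch4p_ch4 adjr_ch2p_ch1p adjr_ch3p_ch1p adjr_ch4p_ch1p adjr_ch3p_ch2p adjr_ch4p_ch2p adjr_ch4p_ch3p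

lemma adj_self: "\<not> chamber_adjacent K K" by (simp add: chamber_adjacent_def)

lemmas adj_all = adj_ch1_ch2 adj_ch1_ch3 adj_ch1_ch4 adj_ch1_ch1p adj_ch1_ch2p adj_ch1_ch3p adj_ch1_ch4p adj_ch2_ch3 adj_ch2_ch4 adj_ch2_ch1p adj_ch2_ch2p adj_ch2_ch3p adj_ch2_ch4p adj_ch3_ch4 adj_ch3_ch1p adj_ch3_ch2p adj_ch3_ch3p adj_ch3_ch4p adj_ch4_ch1p adj_ch4_ch2p adj_ch4_ch3p adj_ch4_ch4p adj_ch1p_ch2p adj_ch1p_ch3p adj_ch1p_ch4p adj_ch2p_ch3p adj_ch2p_ch4p adj_ch3p_ch4p

lemma dj_ch1_ch2: "disjnt ch1 ch2"
  unfolding disjnt_def ch1_def ch2_def by auto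

lemma dj_ch1_ch3: "disjnt ch1 ch3"
  unfolding disjnt_def ch1_def ch3_def by auto

lemma dj_ch1_ch4: "disjnt ch1 ch4"
  unfolding disjnt_def ch1_def ch4_def by auto

lemma dj_ch1_ch1p: "disjnt ch1 ch1'"
  unfolding disjnt_def ch1_def ch1'_def by auto

lemma dj_ch1_ch2p: "disjnt ch1 ch2'"
  unfolding disjnt_def ch1_def ch2'_def by auto

lemma dj_ch1_ch3p: "disjnt ch1 ch3'"
  unfolding disjnt_def ch1_def ch3'_def by auto

lemma dj_ch1_ch4p: "disjnt ch1 ch4'"
  unfolding disjnt_def ch1_def ch4'_def by auto

lemma dj_ch2_ch1: "disjnt ch2 ch1"
  unfolding disjnt_def ch2_def ch1_def by auto

lemma dj_ch2_ch3: "disjnt ch2 ch3"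
  unfolding disjnt_def ch2_def ch3_def by auto

lemma dj_ch2_ch4: "disjnt ch2 ch4"
  unfolding disjnt_def ch2_def ch4_def by auto

lemma dj_ch2_ch1p: "disjnt ch2 ch1'"
  unfolding disjnt_def ch2_def ch1'_def by auto

lemma dj_ch2_ch2p: "disjnt ch2 ch2'"
  unfolding disjnt_def ch2_def ch2'_def by auto

lemma dj_ch2_ch3p: "disjnt ch2 ch3'"
  unfolding disjnt_def ch2_def ch3'_def by auto

lemma dj_ch2_ch4p: "disjnt ch2 ch4'"
  unfolding disjnt_def ch2_def ch4'_def by auto

lemma dj_ch3_ch1: "disjnt ch3 ch1"
  unfolding disjnt_def ch3_def ch1_def by auto

lemma dj_ch3_ch2: "disjnt ch3 ch2"
  unfolding disjnt_def ch3_def ch2_def by auto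

lemma dj_ch3_ch4: "disjnt ch3 ch4"
  unfolding disjnt_def ch3_def ch4_def by auto

lemma dj_ch3_ch1p: "disjnt ch3 ch1'"
  unfolding disjnt_def ch3_def ch1'_def by auto

lemma dj_ch3_ch2p: "disjnt ch3 ch2'"
  unfolding disjnt_def ch3_def ch2'_def by auto

lemma dj_ch3_ch3p: "disjnt ch3 ch3'"
  unfolding disjnt_def ch3_def ch3'_def by auto

lemma dj_ch3_ch4p: "disjnt ch3 ch4'"
  unfolding disjnt_def ch3_def ch4'_def by auto

lemma dj_ch4_ch1: "disjnt ch4 ch1"
  unfolding disjnt_def ch4_def ch1_def by auto

lemma dj_ch4_ch2: "disjnt ch4 ch2"
  unfolding disjnt_def ch4_def ch2_def by auto

lemma dj_ch4_ch3: "disjnt ch4 ch3"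
  unfolding disjnt_def ch4_def ch3_def by auto

lemma dj_ch4_ch1p: "disjnt ch4 ch1'"
  unfolding disjnt_def ch4_def ch1'_def by auto

lemma dj_ch4_ch2p: "disjnt ch4 ch2'"
  unfolding disjnt_def ch4_def ch2'_def by auto

lemma dj_ch4_ch3p: "disjnt ch4 ch3'"
  unfolding disjnt_def ch4_def ch3'_def by auto

lemma dj_ch4_ch4p: "disjnt ch4 ch4'"
  unfolding disjnt_def ch4_def ch4'_def by auto

lemma dj_ch1p_ch1: "disjnt ch1' ch1"
  unfolding disjnt_def ch1'_def ch1_def by auto

lemma dj_ch1p_ch2: "disjnt ch1' ch2"
  unfolding disjnt_def ch1'_def ch2_def by auto

lemma dj_ch1p_ch3: "disjnt ch1' ch3"
  unfolding disjnt_def ch1'_def ch3_def by auto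

lemma dj_ch1p_ch4: "disjnt ch1' ch4"
  unfolding disjnt_def ch1'_def ch4_def by auto

lemma dj_ch1p_ch2p: "disjnt ch1' ch2'"
  unfolding disjnt_def ch1'_def ch2'_def by auto

lemma dj_ch1p_ch3p: "disjnt ch1' ch3'"
  unfolding disjnt_def ch1'_def ch3'_def by auto

lemma dj_ch1p_ch4p: "disjnt ch1' ch4'"
  unfolding disjnt_def ch1'_def ch4'_def by auto

lemma dj_ch2p_ch1: "disjnt ch2' ch1"
  unfolding disjnt_def ch2'_def ch1_def by auto

lemma dj_ch2p_ch2: "disjnt ch2' ch2"
  unfolding disjnt_def ch2'_def ch2_def by auto

lemma dj_ch2p_ch3: "disjnt ch2' ch3"
  unfolding disjnt_def ch2'_def ch3_def by auto

lemma dj_ch2p_ch4: "disjnt ch2' ch4"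
  unfolding disjnt_def ch2'_def ch4_def by auto

lemma dj_ch2p_ch1p: "disjnt ch2' ch1'"
  unfolding disjnt_def ch2'_def ch1'_def by auto

lemma dj_ch2p_ch3p: "disjnt ch2' ch3'"
  unfolding disjnt_def ch2'_def ch3'_def by auto

lemma dj_ch2p_ch4p: "disjnt ch2' ch4'"
  unfolding disjnt_def ch2'_def ch4'_def by auto

lemma dj_ch3p_ch1: "disjnt ch3' ch1"
  unfolding disjnt_def ch3'_def ch1_def by auto

lemma dj_ch3p_ch2: "disjnt ch3' ch2"
  unfolding disjnt_def ch3'_def ch2_def by auto

lemma dj_ch3p_ch3: "disjnt ch3' ch3"
  unfolding disjnt_def ch3'_def ch3_def by auto

lemma dj_ch3p_ch4: "disjnt ch3' ch4"
  unfolding disjnt_def ch3'_def ch4_def by auto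

lemma dj_ch3p_ch1p: "disjnt ch3' ch1'"
  unfolding disjnt_def ch3'_def ch1'_def by auto

lemma dj_ch3p_ch2p: "disjnt ch3' ch2'"
  unfolding disjnt_def ch3'_def ch2'_def by auto

lemma dj_ch3p_ch4p: "disjnt ch3' ch4'"
  unfolding disjnt_def ch3'_def ch4'_def by auto

lemma dj_ch4p_ch1: "disjnt ch4' ch1"
  unfolding disjnt_def ch4'_def ch1_def by auto

lemma dj_ch4p_ch2: "disjnt ch4' ch2"
  unfolding disjnt_def ch4'_def ch2_def by auto

lemma dj_ch4p_ch3: "disjnt ch4' ch3"
  unfolding disjnt_def ch4'_def ch3_def by auto

lemma dj_ch4p_ch4: "disjnt ch4' ch4"
  unfolding disjnt_def ch4'_def ch4_def by auto

lemma dj_ch4p_ch1p: "disjnt ch4' ch1'"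
  unfolding disjnt_def ch4'_def ch1'_def by auto

lemma dj_ch4p_ch2p: "disjnt ch4' ch2'"
  unfolding disjnt_def ch4'_def ch2'_def by auto

lemma dj_ch4p_ch3p: "disjnt ch4' ch3'"
  unfolding disjnt_def ch4'_def ch3'_def by auto

lemmas dj_all = dj_ch1_ch2 dj_ch1_ch3 dj_ch1_ch4 dj_ch1_ch1p dj_ch1_ch2p dj_ch1_ch3p dj_ch1_ch4p dj_ch2_ch1 dj_ch2_ch3 dj_ch2_ch4 dj_ch2_ch1p dj_ch2_ch2p dj_ch2_ch3p dj_ch2_ch4p dj_ch3_ch1 dj_ch3_ch2 dj_ch3_ch4 dj_ch3_ch1p dj_ch3_ch2p dj_ch3_ch3p dj_ch3_ch4p dj_ch4_ch1 dj_ch4_ch2 dj_ch4_ch3 dj_ch4_ch1p dj_ch4_ch2p dj_ch4_ch3p dj_ch4_ch4p dj_ch1p_ch1 dj_ch1p_ch2 dj_ch1p_ch3 dj_ch1p_ch4 dj_ch1p_ch2p dj_ch1p_ch3p dj_ch1p_ch4p dj_ch2p_ch1 dj_ch2p_ch2 dj_ch2p_ch3 dj_ch2p_ch4 dj_ch2p_ch1p dj_ch2p_ch3p dj_ch2p_ch4p dj_ch3p_ch1 dj_ch3p_ch2 dj_ch3p_ch3 dj_ch3p_ch4 dj_ch3p_ch1p dj_ch3p_ch2p dj_ch3p_ch4p dj_ch4p_ch1 dj_ch4p_ch2 dj_ch4p_ch3 dj_ch4p_ch4 dj_ch4p_ch1p dj_ch4p_ch2p dj_ch4p_ch3p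

lemma sub_ch1: "ch1 \<subseteq> arr_complement"
  by (auto simp: arr_complement_def Weyl_def weights13_23_def wpair_def ch1_def)

lemma sub_ch2: "ch2 \<subseteq> arr_complement"
  by (auto simp: arr_complement_def Weyl_def weights13_23_def wpair_def ch2_def)

lemma sub_ch3: "ch3 \<subseteq> arr_complement"
  by (auto simp: arr_complement_def Weyl_def weights13_23_def wpair_def ch3_def)

lemma sub_ch4: "ch4 \<subseteq> arr_complement"
  by (auto simp: arr_complement_def Weyl_def weights13_23_def wpair_def ch4_def)

lemma sub_ch1p: "ch1' \<subseteq> arr_complement"
  by (auto simp: arr_complement_def Weyl_def weights13_23_def wpair_def ch1'_def)

lemma sub_ch2p: "ch2' \<subseteq> arr_complement"
  by (auto simp: arr_complement_def Weyl_def weights13_23_def wpair_def ch2'_def)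

lemma sub_ch3p: "ch3' \<subseteq> arr_complement"
  by (auto simp: arr_complement_def Weyl_def weights13_23_def wpair_def ch3'_def)

lemma sub_ch4p: "ch4' \<subseteq> arr_complement"
  by (auto simp: arr_complement_def Weyl_def weights13_23_def wpair_def ch4'_def)

lemma sup_all: "arr_complement \<subseteq> ch1 \<union> ch2 \<union> ch3 \<union> ch4 \<union> ch1' \<union> ch2' \<union> ch3' \<union> ch4'"
proof
  fix p assume "p \<in> arr_complement"
  then obtain s x y where p: "p = (s,x,y)" and h: "s > 0" "2*x - y > 0" "-x + 2*y > 0"
    "x \<noteq> 0" "y - x \<noteq> 0" "y \<noteq> 0" "s + x \<noteq> 0" "s - x + y \<noteq> 0" "s - y \<noteq> 0"
    "-s + x \<noteq> 0" "-s - x + y \<noteq> 0" "-s - y \<noteq> 0"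
    by (cases p) (auto simp: arr_complement_def Weyl_def weights13_23_def wpair_def)
  have "(s,x,y) \<in> ch1 \<union> ch2 \<union> ch3 \<union> ch4 \<union> ch1' \<union> ch2' \<union> ch3' \<union> ch4'"
  proof (cases "x < y")
    case True
    then show ?thesis using h
      by (cases "s < y - x"; cases "s < x"; cases "s < y")
        (simp_all add: ch1_def ch2_def ch3_def ch4_def)
  next
    case False
    then have "y < x" using h by auto
    then show ?thesis using h
      by (cases "s < x - y"; cases "s < y"; cases "s < x")
        (simp_all add: ch1'_def ch2'_def ch3'_def ch4'_def)
  qed
  then show "p \<in> ch1 \<union> ch2 \<union> ch3 \<union> ch4 \<union> ch1' \<union> ch2' \<union> ch3' \<union> ch4'" using p by simp
qed

lemma chambers_eq: "chambers = {ch1, ch2, ch3, ch4, ch1', ch2', ch3', ch4'}"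
  unfolding chambers_def
proof (rule components_open_unique)
  show "pairwise disjnt {ch1, ch2, ch3, ch4, ch1', ch2', ch3', ch4'}"
    unfolding pairwise_insert by (auto simp: dj_all)
  show "\<Union>{ch1, ch2, ch3, ch4, ch1', ch2', ch3', ch4'} = arr_complement"
    using sup_all sub_ch1 sub_ch2 sub_ch3 sub_ch4 sub_ch1p sub_ch2p sub_ch3p sub_ch4p by auto
  fix X assume X: "X \<in> {ch1, ch2, ch3, ch4, ch1', ch2', ch3', ch4'}"
  have "open X \<and> connected X" using X
    by (auto simp only: ch1_eq ch2_eq ch3_eq ch4_eq ch1p_eq ch2p_eq ch3p_eq ch4p_eq insert_iff empty_iff intro!: Ho_open Ho_conn)
  moreover have "X \<noteq> {}" using X ch1_wit ch2_wit ch3_wit ch4_wit ch1p_wit ch2p_wit ch3p_wit ch4p_wit by auto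
  ultimately show "open X \<and> connected X \<and> X \<noteq> {}" by blast
qed

theorem theorem4p1:
  shows "chambers = {ch1, ch2, ch3, ch4, ch1', ch2', ch3', ch4'}
    \<and> card chambers = 8
    \<and> (\<forall>p\<in>ch1. sign_vector p = [1, -1, -1, 1, 1])
    \<and> (\<forall>p\<in>ch2. sign_vector p = [1, -1, -1, -1, 1])
    \<and> (\<forall>p\<in>ch3. sign_vector p = [1, -1, 1, -1, 1])
    \<and> (\<forall>p\<in>ch4. sign_vector p = [1, 1, 1, -1, 1])
    \<and> (\<forall>p\<in>ch1'. sign_vector p = [-1, -1, -1, 1, 1])
    \<and> (\<forall>p\<in>ch2'. sign_vector p = [-1, -1, 1, 1, 1])
    \<and> (\<forall>p\<in>ch3'. sign_vector p = [-1, -1, 1, -1, 1])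
    \<and> (\<forall>p\<in>ch4'. sign_vector p = [-1, -1, 1, -1, -1])
    \<and> (\<forall>K\<in>chambers. \<forall>L\<in>chambers.
         chamber_adjacent K L \<longleftrightarrow> (K, L) \<in> adjacency_edges \<or> (L, K) \<in> adjacency_edges)"
proof -
  have "card {ch1, ch2, ch3, ch4, ch1', ch2', ch3', ch4'} = 8" by (simp add: ne_all)
  moreover have "\<forall>K\<in>{ch1, ch2, ch3, ch4, ch1', ch2', ch3', ch4'}. \<forall>L\<in>{ch1, ch2, ch3, ch4, ch1', ch2', ch3', ch4'}.
         chamber_adjacent K L \<longleftrightarrow> (K, L) \<in> adjacency_edges \<or> (L, K) \<in> adjacency_edges"
    by (simp add: adjacency_edges_def ne_all adj_all adj_rev_all adj_self)
  moreover have "(\<forall>p\<in>ch1. sign_vector p = [1, -1, -1, 1, 1])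
    \<and> (\<forall>p\<in>ch2. sign_vector p = [1, -1, -1, -1, 1])
    \<and> (\<forall>p\<in>ch3. sign_vector p = [1, -1, 1, -1, 1])
    \<and> (\<forall>p\<in>ch4. sign_vector p = [1, 1, 1, -1, 1])
    \<and> (\<forall>p\<in>ch1'. sign_vector p = [-1, -1, -1, 1, 1])
    \<and> (\<forall>p\<in>ch2'. sign_vector p = [-1, -1, 1, 1, 1])
    \<and> (\<forall>p\<in>ch3'. sign_vector p = [-1, -1, 1, -1, 1])
    \<and> (\<forall>p\<in>ch4'. sign_vector p = [-1, -1, 1, -1, -1])"
    by (auto simp: sign_vector_def sign_weights_def wpair_def sgn_if ch1_def ch2_def ch3_def ch4_def ch1'_def ch2'_def ch3'_def ch4'_def)
  ultimately show ?thesis using chambers_eq by simp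
qed

end
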